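(* Let $R$ be a ring with identity. Then $R$ is pseudopolar if and only if $R$ is both strongly $\pi$-rad clean and quasipolar.
   Context: $J(R)$ is the Jacobson radical and $U(R)$ the unit group of $R$. $\mathrm{comm}(a)=\{x\in R\mid xa=ax\}$, $\mathrm{comm}^2(a)=\{x\in R\mid xy=yx\text{ for all }y\in\mathrm{comm}(a)\}$; $R^{qnil}=\{a\in R\mid 1+ax\in U(R)\text{ for all }x\in\mathrm{comm}(a)\}$. An element $a$ is quasipolar if there is an idempotent $p\in\mathrm{comm}^2(a)$ with $a+p\in U(R)$ and $ap\in R^{qnil}$. An element $a$ is pseudopolar if there exist an idempotent $p\in\mathrm{comm}^2(a)$ and $k\in\mathbb{N}$ with $a+p\in U(R)$ and $a^kp\in J(R)$. An element $a$ is strongly $\pi$-rad clean if there is an idempotent $e\in R$ with $ae=ea$, $a-e\in U(R)$, and $a^ne\in J(R)$ for some $n\in\mathbb{N}$. The ring $R$ has one of these properties if every element does. *)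

theory Defs
  imports Main
begin

(* All notions are relative to the ring 'a :: ring_1 (a ring with identity,
   not necessarily commutative); the whole type is the ring R. *)

definition Units :: "'a::ring_1 set" where
  "Units = {u. \<exists>v. u * v = 1 \<and> v * u = 1}"

definition left_ideal :: "'a::ring_1 set \<Rightarrow> bool" where
  "left_ideal I \<longleftrightarrow> 0 \<in> I \<and> (\<forall>x\<in>I. \<forall>y\<in>I. x - y \<in> I) \<and> (\<forall>r. \<forall>x\<in>I. r * x \<in> I)"

definition maximal_left_ideal :: "'a::ring_1 set \<Rightarrow> bool" where
  "maximal_left_ideal M \<longleftrightarrow> left_ideal M \<and> M \<noteq> UNIV \<and>
     (\<forall>I. left_ideal I \<and> M \<subseteq> I \<and> I \<noteq> UNIV \<longrightarrow> I = M)"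

definition Jrad :: "'a::ring_1 set" where
  "Jrad = \<Inter> {M. maximal_left_ideal M}"

definition comm :: "'a::ring_1 \<Rightarrow> 'a set" where
  "comm a = {x. x * a = a * x}"

definition comm2 :: "'a::ring_1 \<Rightarrow> 'a set" where
  "comm2 a = {x. \<forall>y\<in>comm a. x * y = y * x}"

definition qnil :: "'a::ring_1 set" where
  "qnil = {a. \<forall>x\<in>comm a. 1 + a * x \<in> Units}"

definition idempotent :: "'a::ring_1 \<Rightarrow> bool" where
  "idempotent p \<longleftrightarrow> p * p = p"

definition quasipolar_elt :: "'a::ring_1 \<Rightarrow> bool" where
  "quasipolar_elt a \<longleftrightarrow> (\<exists>p. idempotent p \<and> p \<in> comm2 a \<and> a + p \<in> Units \<and> a * p \<in> qnil)"

definition pseudopolar_elt :: "'a::ring_1 \<Rightarrow> bool" where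
  "pseudopolar_elt a \<longleftrightarrow> (\<exists>p k. idempotent p \<and> p \<in> comm2 a \<and> a + p \<in> Units \<and> k \<ge> 1 \<and> a ^ k * p \<in> Jrad)"

definition spi_rad_clean_elt :: "'a::ring_1 \<Rightarrow> bool" where
  "spi_rad_clean_elt a \<longleftrightarrow> (\<exists>e n. idempotent e \<and> a * e = e * a \<and> a - e \<in> Units \<and> n \<ge> 1 \<and> a ^ n * e \<in> Jrad)"

definition quasipolar_ring :: "'a::ring_1 itself \<Rightarrow> bool" where
  "quasipolar_ring _ \<longleftrightarrow> (\<forall>a::'a. quasipolar_elt a)"

definition pseudopolar_ring :: "'a::ring_1 itself \<Rightarrow> bool" where
  "pseudopolar_ring _ \<longleftrightarrow> (\<forall>a::'a. pseudopolar_elt a)"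

definition spi_rad_clean_ring :: "'a::ring_1 itself \<Rightarrow> bool" where
  "spi_rad_clean_ring _ \<longleftrightarrow> (\<forall>a::'a. spi_rad_clean_elt a)"

end

theory Submission
  imports Defs
begin

lemma J_diff: "x \<in> Jrad \<Longrightarrow> y \<in> Jrad \<Longrightarrow> x - y \<in> (Jrad::'a::ring_1 set)"
  unfolding Jrad_def maximal_left_ideal_def left_ideal_def by auto

lemma J_mult: "x \<in> Jrad \<Longrightarrow> r * x \<in> (Jrad::'a::ring_1 set)"
  unfolding Jrad_def maximal_left_ideal_def left_ideal_def by auto

lemma J_neg: "x \<in> Jrad \<Longrightarrow> - x \<in> (Jrad::'a::ring_1 set)"
  using J_mult[of x "-1"] by simp

lemma li_add: "left_ideal I \<Longrightarrow> x \<in> I \<Longrightarrow> y \<in> I \<Longrightarrow> x + y \<in> I"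
proof -
  assume a: "left_ideal I" "x \<in> I" "y \<in> I"
  hence "0 - y \<in> I" unfolding left_ideal_def by blast
  hence "x - (0 - y) \<in> I" using a unfolding left_ideal_def by blast
  thus ?thesis by simp
qed

lemma J_left_inv:
  fixes j :: "'a::ring_1"
  assumes j: "j \<in> Jrad"
  shows "\<exists>u. u * (1 - j) = 1"
proof (rule ccontr)
  assume no: "\<not> (\<exists>u. u * (1 - j) = 1)"
  define L where "L = {r * (1 - j) | r. True}"
  define A where "A = {I. left_ideal I \<and> L \<subseteq> I \<and> (1::'a) \<notin> I}"
  have liL: "left_ideal L"
    unfolding left_ideal_def L_def
  proof (intro conjI ballI allI)
    show "0 \<in> {r * (1 - (j::'a::ring_1)) | r. True}"
      by (rule CollectI, rule exI[of _ 0], simp)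
  next
    fix x y assume "x \<in> {r * (1 - (j::'a::ring_1)) | r. True}" "y \<in> {r * (1 - (j::'a::ring_1)) | r. True}"
    then obtain r s where "x = r * (1-j)" "y = s * (1-j)" by auto
    thus "x - y \<in> {r * (1 - (j::'a::ring_1)) | r. True}"
      by (intro CollectI exI[of _ "r - s"]) (simp add: left_diff_distrib)
  next
    fix t x assume "x \<in> {r * (1 - (j::'a::ring_1)) | r. True}"
    then obtain r where "x = r * (1-j)" by auto
    thus "t * x \<in> {r * (1 - (j::'a::ring_1)) | r. True}"
      by (intro CollectI exI[of _ "t * r"]) (simp add: mult.assoc)
  qed
  have "L \<in> A" unfolding A_def using liL no L_def by auto
  hence Ane: "A \<noteq> {}" by auto
  have ch: "\<Union>C \<in> A" if Cne: "C \<noteq> {}" and Cch: "subset.chain A C" for C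
  proof -
    have CA: "C \<subseteq> A" and tot: "\<forall>X\<in>C. \<forall>Y\<in>C. X \<subseteq> Y \<or> Y \<subseteq> X"
      using Cch unfolding subset.chain_def by auto
    obtain I0 where I0: "I0 \<in> C" using Cne by auto
    have li: "left_ideal I" "L \<subseteq> I" "1 \<notin> I" if "I \<in> C" for I
      using CA that unfolding A_def by auto
    have "left_ideal (\<Union>C)"
      unfolding left_ideal_def
    proof (intro conjI ballI allI)
      show "0 \<in> \<Union>C" using li(1)[OF I0] I0 unfolding left_ideal_def by auto
    next
      fix x y assume "x \<in> \<Union>C" "y \<in> \<Union>C"
      then obtain X Y where XY: "X \<in> C" "Y \<in> C" "x \<in> X" "y \<in> Y" by auto
      show "x - y \<in> \<Union>C"
      proof (cases "X \<subseteq> Y")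
        case True thus ?thesis using XY li(1)[of Y] unfolding left_ideal_def by blast
      next
        case False hence "Y \<subseteq> X" using tot XY by auto
        thus ?thesis using XY li(1)[of X] unfolding left_ideal_def by blast
      qed
    next
      fix r x assume "x \<in> \<Union>C"
      then obtain X where "X \<in> C" "x \<in> X" by auto
      thus "r * x \<in> \<Union>C" using li(1)[of X] unfolding left_ideal_def by blast
    qed
    moreover have "L \<subseteq> \<Union>C" using li(2)[OF I0] I0 by auto
    moreover have "1 \<notin> \<Union>C" using li(3) by auto
    ultimately show ?thesis unfolding A_def by auto
  qed
  obtain M where M: "M \<in> A" and Mmax: "\<forall>X\<in>A. M \<subseteq> X \<longrightarrow> X = M"
    using subset_Zorn_nonempty[OF Ane ch] by blast
  have liM: "left_ideal M" and LM: "L \<subseteq> M" and oneM: "1 \<notin> M" using M unfolding A_def by auto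
  have "maximal_left_ideal M"
    unfolding maximal_left_ideal_def
  proof (intro conjI allI impI)
    show "left_ideal M" by fact
    show "M \<noteq> UNIV" using oneM by auto
    fix I assume I: "left_ideal I \<and> M \<subseteq> I \<and> I \<noteq> UNIV"
    have "1 \<notin> I"
    proof
      assume "1 \<in> I"
      hence "r \<in> I" for r using I unfolding left_ideal_def by (metis mult.right_neutral)
      thus False using I by auto
    qed
    hence "I \<in> A" using I LM unfolding A_def by auto
    thus "I = M" using Mmax I by auto
  qed
  hence "j \<in> M" using j unfolding Jrad_def by auto
  moreover have "1 - j \<in> M" using LM unfolding L_def by (metis (mono_tags, lifting) mem_Collect_eq mult_1 subsetD)
  ultimately have "(1 - j) + j \<in> M" using li_add[OF liM] by blast
  thus False using oneM by simp
qed

lemma J_unit: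
  fixes j :: "'a::ring_1"
  assumes j: "j \<in> Jrad"
  shows "1 - j \<in> Units"
proof -
  obtain u where u: "u * (1 - j) = 1" using J_left_inv[OF j] by blast
  have uj: "- (u * j) \<in> Jrad" using J_neg[OF J_mult[OF j]] .
  obtain w where w: "w * (1 - - (u * j)) = 1" using J_left_inv[OF uj] by blast
  have ueq: "1 - - (u * j) = u" using u by (simp add: algebra_simps)
  have "w = w * (u * (1 - j))" using u by simp
  also have "\<dots> = 1 - j" using w ueq by (metis mult.assoc mult_1)
  finally have "(1 - j) * u = 1" using w ueq by simp
  thus ?thesis using u unfolding Units_def by auto
qed

lemma J_idem_zero:
  fixes g :: "'a::ring_1"
  assumes "g \<in> Jrad" "g * g = g"
  shows "g = 0"
proof -
  obtain w where "w * (1 - g) = 1" using J_unit[OF assms(1)] unfolding Units_def by auto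
  hence "g = w * ((1 - g) * g)" by (metis mult.assoc mult_1)
  also have "\<dots> = 0" using assms(2) by (simp add: algebra_simps)
  finally show ?thesis .
qed

lemma comm_pow: "x * b = b * x \<Longrightarrow> b * x ^ m = x ^ m * (b::'a::ring_1)"
proof (induction m)
  case (Suc m)
  have "b * x ^ Suc m = (b * x ^ m) * x" by (simp add: power_Suc2 mult.assoc del: power_Suc)
  also have "\<dots> = x ^ m * (b * x)" using Suc by (simp add: mult.assoc)
  also have "\<dots> = x ^ m * (x * b)" using Suc.prems by simp
  also have "\<dots> = x ^ Suc m * b" by (simp add: power_Suc2 mult.assoc del: power_Suc)
  finally show ?case .
qed simp

lemma pow_mult_comm: "x * b = b * x \<Longrightarrow> (b * x) ^ n = x ^ n * (b::'a::ring_1) ^ n"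
proof (induction n)
  case (Suc n)
  have "(b * x) ^ Suc n = b * x * (x ^ n * b ^ n)" using Suc by simp
  also have "\<dots> = (b * x ^ Suc n) * b ^ n" by (simp add: mult.assoc)
  also have "\<dots> = x ^ Suc n * b ^ Suc n" using comm_pow[OF Suc.prems, of "Suc n"] by (simp add: mult.assoc)
  finally show ?case .
qed simp

lemma geomL: "(1 - c) * (\<Sum>i<n. c ^ i) = 1 - (c::'a::ring_1) ^ n"
proof (induction n)
  case (Suc n)
  have "(1 - c) * (\<Sum>i<Suc n. c ^ i) = (1 - c) * (\<Sum>i<n. c ^ i) + (1 - c) * c ^ n"
    by (simp add: distrib_left)
  also have "\<dots> = 1 - c ^ n + (c ^ n - c * c ^ n)" using Suc by (simp add: left_diff_distrib)
  also have "\<dots> = 1 - c ^ Suc n" by simp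
  finally show ?case .
qed simp

lemma geomR: "(\<Sum>i<n. c ^ i) * (1 - c) = 1 - (c::'a::ring_1) ^ n"
proof (induction n)
  case (Suc n)
  have "(\<Sum>i<Suc n. c ^ i) * (1 - c) = (\<Sum>i<n. c ^ i) * (1 - c) + c ^ n * (1 - c)"
    by (simp add: distrib_right)
  also have "\<dots> = 1 - c ^ n + (c ^ n - c ^ n * c)" using Suc by (simp add: right_diff_distrib)
  also have "\<dots> = 1 - c ^ Suc n" by (simp add: power_Suc2 del: power_Suc)
  finally show ?case .
qed simp

lemma unit_of_two_sided: "l * y = 1 \<Longrightarrow> y * r = 1 \<Longrightarrow> y \<in> (Units::'a::ring_1 set)"
proof -
  assume a: "l * y = 1" "y * r = 1"
  have "l = l * (y * r)" using a by simp
  also have "\<dots> = r" using a by (metis mult.assoc mult_1)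
  finally show ?thesis using a unfolding Units_def by auto
qed

lemma pow_J_qnil:
  fixes b :: "'a::ring_1"
  assumes "b ^ n \<in> Jrad"
  shows "b \<in> qnil"
  unfolding qnil_def
proof (intro CollectI ballI)
  fix x assume "x \<in> comm b"
  hence xb: "x * b = b * x" unfolding comm_def by auto
  define c where "c = - (b * x)"
  have "c ^ n = (-1) ^ n * (x ^ n * b ^ n)" unfolding c_def by (subst power_minus) (simp only: pow_mult_comm[OF xb])
  hence cJ: "c ^ n \<in> Jrad" using J_mult[OF J_mult[OF assms]] by simp
  obtain w where w: "w * (1 - c ^ n) = 1" "(1 - c ^ n) * w = 1" using J_unit[OF cJ] unfolding Units_def by auto
  have "(w * (\<Sum>i<n. c ^ i)) * (1 - c) = 1" using w geomR[of c n] by (simp add: mult.assoc)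
  moreover have "(1 - c) * ((\<Sum>i<n. c ^ i) * w) = 1" using w geomL[of c n] by (simp flip: mult.assoc)
  ultimately have "1 - c \<in> Units" by (rule unit_of_two_sided)
  thus "1 + b * x \<in> Units" unfolding c_def by simp
qed

lemma Units_neg: "u \<in> Units \<Longrightarrow> - u \<in> (Units::'a::ring_1 set)"
  unfolding Units_def by (auto intro: exI[of _ "- v" for v])

lemma unit_comm:
  fixes u v y :: "'a::ring_1"
  assumes "u * v = 1" "v * u = 1" "y * u = u * y"
  shows "y * v = v * y"
proof -
  have "v * y = v * y * (u * v)" using assms by simp
  also have "\<dots> = v * (y * u) * v" by (simp add: mult.assoc)
  also have "\<dots> = v * (u * y) * v" using assms by simp
  also have "\<dots> = (v * u) * (y * v)" by (simp only: mult.assoc)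
  also have "\<dots> = y * v" using assms by simp
  finally show ?thesis by simp
qed


lemma cm_mult: "y * z1 = z1 * y \<Longrightarrow> y * z2 = z2 * y \<Longrightarrow> y * (z1 * z2) = (z1 * z2) * (y::'a::ring_1)"
  by (metis mult.assoc)

lemma idem_prod: "p * p = p \<Longrightarrow> q * q = q \<Longrightarrow> p * q = q * p \<Longrightarrow> (p * q) * (p * q) = p * (q::'a::ring_1)"
  by (metis mult.assoc)

lemma idem_compl: "e * e = e \<Longrightarrow> (1 - e) * (1 - e) = 1 - (e::'a::ring_1)"
  by (simp add: algebra_simps)

lemma unit_idem_zero:
  fixes f :: "'a::ring_1"
  assumes "1 - f \<in> Units" "f * f = f"
  shows "f = 0"
proof -
  obtain w where "w * (1 - f) = 1" using assms(1) unfolding Units_def by auto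
  hence "f = w * ((1 - f) * f)" by (metis mult.assoc mult_1)
  also have "\<dots> = 0" using assms(2) by (simp add: algebra_simps)
  finally show ?thesis .
qed

lemma pow_idem: "p * p = p \<Longrightarrow> k \<ge> 1 \<Longrightarrow> p ^ k = (p::'a::ring_1)"
proof (induction k)
  case (Suc k)
  thus ?case by (cases k) (auto)
qed simp

lemma ap_pow: "a * p = p * a \<Longrightarrow> p * p = p \<Longrightarrow> k \<ge> 1 \<Longrightarrow> (a * p) ^ k = a ^ k * (p::'a::ring_1)"
  using pow_mult_comm[of p a k] pow_idem[of p k] comm_pow[of a p k] by simp

lemma J_pow_neg: "(- a) ^ k * p \<in> Jrad \<Longrightarrow> a ^ k * (p::'a::ring_1) \<in> Jrad"
proof -
  assume h: "(- a) ^ k * p \<in> Jrad"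
  have "(- (- a)) ^ k = (-1) ^ k * (- a) ^ k" by (rule power_minus)
  hence "a ^ k = (-1) ^ k * (- a) ^ k" by simp
  hence "a ^ k * p = (-1) ^ k * ((- a) ^ k * p)" by (simp add: mult.assoc)
  thus ?thesis using J_mult[OF h] by simp
qed

lemma inv_pow: "vi * v = 1 \<Longrightarrow> vi ^ n * v ^ n = (1::'a::ring_1)"
proof (induction n)
  case (Suc n)
  have "vi ^ Suc n * v ^ Suc n = vi ^ n * (vi * v) * v ^ n"
    by (simp only: power_Suc2[of vi] power_Suc[of v] mult.assoc)
  thus ?case using Suc by simp
qed simp

lemma spectral_unique:
  fixes a p e :: "'a::ring_1"
  assumes pp: "p * p = p" and ee: "e * e = e" and pe: "p * e = e * p"
    and pa: "p * a = a * p" and ea: "e * a = a * e"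
    and apU: "a + p \<in> Units" and aeU: "a + e \<in> Units"
    and apq: "a * p \<in> qnil" and aeJ: "a ^ n * e \<in> Jrad"
  shows "p = e"
proof -
  obtain ui where ui: "(a + e) * ui = 1" "ui * (a + e) = 1" using aeU unfolding Units_def by auto
  have uia: "a * ui = ui * a"
    by (rule unit_comm[OF ui]) (simp add: algebra_simps ea)
  have uip: "p * ui = ui * p"
    by (rule unit_comm[OF ui]) (simp add: algebra_simps pa pe)
  define f where "f = p * (1 - e)"
  have pce: "p * (1 - e) = (1 - e) * p" using pe by (simp add: algebra_simps)
  have ff: "f * f = f" unfolding f_def by (rule idem_prod[OF pp idem_compl[OF ee] pce])
  have epz: "e * f = 0" unfolding f_def using ee pe
    by (simp add: algebra_simps) (metis mult.assoc)
  have af: "a * f = (a + e) * f" using epz by (simp add: distrib_right)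
  have fui: "ui * (a * f) = f" using af ui by (simp flip: mult.assoc)
  define x where "x = - (ui * (1 - e))"
  have apui: "a * p * ui = ui * (a * p)" using cm_mult[OF uia[symmetric] uip[symmetric]] by simp
  have ape: "a * p * (1 - e) = (1 - e) * (a * p)"
    using ea pa pe by (simp add: algebra_simps) (metis mult.assoc)
  have cx: "(a * p) * (ui * (1 - e)) = (ui * (1 - e)) * (a * p)"
    by (metis apui ape mult.assoc)
  have "x \<in> comm (a * p)" unfolding comm_def x_def using cx by simp
  hence U1: "1 + a * p * x \<in> Units" using apq unfolding qnil_def by auto
  have "a * p * x = - (a * p * ui * (1 - e))" unfolding x_def by (simp add: mult.assoc)
  also have "\<dots> = - (ui * (a * p) * (1 - e))" using apui by simp
  also have "\<dots> = - f" using fui unfolding f_def by (simp add: mult.assoc)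
  finally have "1 - f \<in> Units" using U1 by simp
  hence f0: "f = 0" using unit_idem_zero ff by blast
  obtain vi where vi: "(a + p) * vi = 1" "vi * (a + p) = 1" using apU unfolding Units_def by auto
  define g where "g = e * (1 - p)"
  have ecp: "e * (1 - p) = (1 - p) * e" using pe by (simp add: algebra_simps)
  have gg: "g * g = g" unfolding g_def by (rule idem_prod[OF ee idem_compl[OF pp] ecp])
  have pgz: "p * g = 0" unfolding g_def using pp pe
    by (simp add: algebra_simps) (metis mult.assoc)
  have ag: "a * g = (a + p) * g" using pgz by (simp add: distrib_right)
  have av: "a * (a + p) = (a + p) * a" by (simp add: algebra_simps pa)
  have powg: "a ^ m * g = (a + p) ^ m * g" for m
  proof (induction m)
    case (Suc m)
    have "a ^ Suc m * g = a ^ m * (a * g)" by (simp add: power_Suc2 mult.assoc del: power_Suc)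
    also have "\<dots> = (a ^ m * (a + p)) * g" using ag by (simp add: mult.assoc)
    also have "a ^ m * (a + p) = (a + p) * a ^ m" using comm_pow[OF av, of m] by simp
    also have "(a + p) * a ^ m * g = (a + p) * (a + p) ^ m * g" using Suc by (simp add: mult.assoc)
    finally show ?case by simp
  qed simp
  have "g = (vi ^ n * (a + p) ^ n) * g" using inv_pow[OF vi(2)] by simp
  also have "\<dots> = vi ^ n * (a ^ n * g)" using powg[of n] by (simp add: mult.assoc)
  also have "a ^ n * g = (1 - p) * (a ^ n * e)"
  proof -
    have c0: "p * a ^ n = a ^ n * p" using comm_pow[of a p n] pa by simp
    have c1: "(1 - p) * a ^ n = a ^ n * (1 - p)"
      using c0 by (simp add: algebra_simps)
    have "a ^ n * g = a ^ n * (1 - p) * e" unfolding g_def using ecp by (simp add: mult.assoc)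
    also have "\<dots> = (1 - p) * (a ^ n * e)" using c1 by (simp flip: mult.assoc)
    finally show ?thesis .
  qed
  finally have "g \<in> Jrad" using J_mult[OF J_mult[OF aeJ]] by simp
  hence g0: "g = 0" using J_idem_zero gg by blast
  have "p = p * e" using f0 unfolding f_def by (simp add: algebra_simps)
  moreover have "e = e * p" using g0 unfolding g_def by (simp add: algebra_simps)
  ultimately show ?thesis using pe by simp
qed

theorem theorem4p4:
  shows "pseudopolar_ring TYPE('a::ring_1) \<longleftrightarrow>
         spi_rad_clean_ring TYPE('a) \<and> quasipolar_ring TYPE('a)"
proof
  assume H: "pseudopolar_ring TYPE('a::ring_1)"
  have spi: "spi_rad_clean_elt a" for a :: 'a
  proof -
    obtain p k where p: "idempotent p" "p \<in> comm2 (- a)" "- a + p \<in> Units" "k \<ge> 1" "(- a) ^ k * p \<in> Jrad"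
      using H unfolding pseudopolar_ring_def pseudopolar_elt_def by blast
    have "- a \<in> comm (- a)" unfolding comm_def by simp
    hence "p * (- a) = (- a) * p" using p(2) unfolding comm2_def by blast
    hence "a * p = p * a" by simp
    moreover have "a - p \<in> Units" using Units_neg[OF p(3)] by simp
    ultimately show ?thesis unfolding spi_rad_clean_elt_def using p J_pow_neg[OF p(5)] by auto
  qed
  have qp: "quasipolar_elt a" for a :: 'a
  proof -
    obtain p k where p: "idempotent p" "p \<in> comm2 a" "a + p \<in> Units" "k \<ge> 1" "a ^ k * p \<in> Jrad"
      using H unfolding pseudopolar_ring_def pseudopolar_elt_def by blast
    have "a \<in> comm a" unfolding comm_def by simp
    hence "p * a = a * p" using p(2) unfolding comm2_def by blast
    hence "(a * p) ^ k = a ^ k * p" using ap_pow[of a p k] p(1,4) unfolding idempotent_def by simp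
    hence "a * p \<in> qnil" using pow_J_qnil[of "a * p" k] p(5) by simp
    thus ?thesis unfolding quasipolar_elt_def using p by auto
  qed
  show "spi_rad_clean_ring TYPE('a) \<and> quasipolar_ring TYPE('a)"
    unfolding spi_rad_clean_ring_def quasipolar_ring_def using spi qp by blast
next
  assume H: "spi_rad_clean_ring TYPE('a) \<and> quasipolar_ring TYPE('a)"
  have "pseudopolar_elt a" for a :: 'a
  proof -
    obtain p where p: "idempotent p" "p \<in> comm2 a" "a + p \<in> Units" "a * p \<in> qnil"
      using H unfolding quasipolar_ring_def quasipolar_elt_def by blast
    obtain e n where e: "idempotent e" "(- a) * e = e * (- a)" "- a - e \<in> Units" "n \<ge> 1" "(- a) ^ n * e \<in> Jrad"
      using H unfolding spi_rad_clean_ring_def spi_rad_clean_elt_def by blast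
    have ea: "e * a = a * e" using e(2) by simp
    have "e \<in> comm a" unfolding comm_def using ea by simp
    hence pe: "p * e = e * p" using p(2) unfolding comm2_def by blast
    have "a \<in> comm a" unfolding comm_def by simp
    hence pa: "p * a = a * p" using p(2) unfolding comm2_def by blast
    have aeU: "a + e \<in> Units" using Units_neg[OF e(3)] by (simp add: algebra_simps)
    have aeJ: "a ^ n * e \<in> Jrad" using J_pow_neg[OF e(5)] .
    have "p = e" using spectral_unique[OF _ _ pe pa ea p(3) aeU p(4) aeJ] p(1) e(1)
      unfolding idempotent_def by blast
    thus ?thesis unfolding pseudopolar_elt_def using p e(4) aeJ by auto
  qed
  thus "pseudopolar_ring TYPE('a)" unfolding pseudopolar_ring_def by blast
qed

end
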